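(* Let $S$ be an investment strategy with parameter space $\mathbb W=\mathcal W_k^\ell$ satisfying conditions $(\mathrm L_\varepsilon)$ and $(\mathrm D_c)$, let $c'=\frac{2c}{\varepsilon}$, let $\sigma>0$, $\Gamma\ge2$, and $0<\nu\le2$. Define $\delta'_t(\nu)=\frac{\nu}{3\Gamma c'mt^4k\ell}$. Then there is $t_0$ (depending only on $\nu,c',m$) such that for all $t\ge t_0$, every market sequence, and all $\mathbf w,\mathbf w'\in\mathbb W$ with $|w_{ij}-w'_{ij}|\le\delta'_t(\nu)$ for all $1\le i\le\ell$, $1\le j\le k$: $(1+\nu)^{-1}F_t(\mathbf w)\le F_t(\mathbf w')\le(1+\nu)F_t(\mathbf w)$.
   Context: Let $m\ge2$ and $\mathbf x_0,\mathbf x_1,\dots\in(0,\infty)^m$ be return vectors. $\mathcal W_k=\{\mathbf w\in[0,1]^k:\sum_i w_i=1\}$. An investment strategy $S$ with parameter space $\mathbb W=\mathcal W_k^\ell$ (elements $\mathbf w=(\mathbf w_1,\dots,\mathbf w_\ell)$, $\mathbf w_i=(w_{i1},\dots,w_{ik})$) assigns to each $t\ge0$, $\mathbf w$ a description $S_t(\mathbf w)\in\mathcal W_m$; $\mathcal R_t(\mathbf w)=\prod_{s=0}^{t-1}S_s(\mathbf w)\cdot\mathbf x_s$. Damped return: $f_{ij}(\mathbf w)=e^{\Gamma\min(w_{ij}-\sigma,0)}$ and $F_t(\mathbf w)=\mathcal R_t(\mathbf w)\prod_{i=1}^\ell\prod_{j=1}^k f_{ij}(\mathbf w)$. Condition $(\mathrm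 L_\varepsilon)$: $S_{ti}(\mathbf w)\ge\frac{\varepsilon}{2m(t+1)^2}$ for all $t,i,\mathbf w$ (with fixed $\varepsilon\in(0,1)$). Condition $(\mathrm D_c)$: for all $t\ge0$, $1\le i\le m$, $\mathbf w,\mathbf w'\in\mathbb W$, $|S_{ti}(\mathbf w)-S_{ti}(\mathbf w')|\le c(t+1)\sum_{\iota=1}^\ell\sum_{j=1}^{k-1}|w_{\iota j}-w'_{\iota j}|$. *)

theory Defs
  imports Complex_Main
begin

text \<open>Vectors are functions on nat, relevant on indices 1..n.
  A parameter w in W_k^l is a function nat => nat => real, w i j = w_{ij}.\<close>

definition simplex :: "nat \<Rightarrow> (nat \<Rightarrow> real) \<Rightarrow> bool" where
  "simplex n v \<longleftrightarrow> (\<forall>i\<in>{1..n}. 0 \<le> v i \<and> v i \<le> 1) \<and> (\<Sum>i=1..n. v i) = 1"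

definition param_space :: "nat \<Rightarrow> nat \<Rightarrow> (nat \<Rightarrow> nat \<Rightarrow> real) set" where
  "param_space k l = {w. \<forall>i\<in>{1..l}. simplex k (w i)}"

definition strategy ::
  "nat \<Rightarrow> nat \<Rightarrow> nat \<Rightarrow> (nat \<Rightarrow> (nat \<Rightarrow> nat \<Rightarrow> real) \<Rightarrow> nat \<Rightarrow> real) \<Rightarrow> bool" where
  "strategy m k l S \<longleftrightarrow> (\<forall>t. \<forall>w\<in>param_space k l. simplex m (S t w))"

definition cond_L ::
  "nat \<Rightarrow> nat \<Rightarrow> nat \<Rightarrow> real \<Rightarrow> (nat \<Rightarrow> (nat \<Rightarrow> nat \<Rightarrow> real) \<Rightarrow> nat \<Rightarrow> real) \<Rightarrow> bool" where
  "cond_L m k l \<epsilon> S \<longleftrightarrow>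
     (\<forall>t. \<forall>i\<in>{1..m}. \<forall>w\<in>param_space k l.
        S t w i \<ge> \<epsilon> / (2 * real m * (real t + 1)^2))"

definition cond_D ::
  "nat \<Rightarrow> nat \<Rightarrow> nat \<Rightarrow> real \<Rightarrow> (nat \<Rightarrow> (nat \<Rightarrow> nat \<Rightarrow> real) \<Rightarrow> nat \<Rightarrow> real) \<Rightarrow> bool" where
  "cond_D m k l c S \<longleftrightarrow>
     (\<forall>t. \<forall>i\<in>{1..m}. \<forall>w\<in>param_space k l. \<forall>w'\<in>param_space k l.
        \<bar>S t w i - S t w' i\<bar>
          \<le> c * (real t + 1) * (\<Sum>\<iota>=1..l. \<Sum>j=1..k-1. \<bar>w \<iota> j - w' \<iota> j\<bar>))"

definition market :: "nat \<Rightarrow> (nat \<Rightarrow> nat \<Rightarrow> real) \<Rightarrow> bool" where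
  "market m x \<longleftrightarrow> (\<forall>s. \<forall>i\<in>{1..m}. x s i > 0)"

definition wealth ::
  "nat \<Rightarrow> (nat \<Rightarrow> (nat \<Rightarrow> nat \<Rightarrow> real) \<Rightarrow> nat \<Rightarrow> real) \<Rightarrow> (nat \<Rightarrow> nat \<Rightarrow> real)
     \<Rightarrow> nat \<Rightarrow> (nat \<Rightarrow> nat \<Rightarrow> real) \<Rightarrow> real" where
  "wealth m S x t w = (\<Prod>s<t. \<Sum>i=1..m. S s w i * x s i)"

definition damp :: "real \<Rightarrow> real \<Rightarrow> real \<Rightarrow> real" where
  "damp \<Gamma> \<sigma> a = exp (\<Gamma> * min (a - \<sigma>) 0)"

definition damped_wealth ::
  "nat \<Rightarrow> nat \<Rightarrow> nat \<Rightarrow> real \<Rightarrow> real \<Rightarrow> (nat \<Rightarrow> (nat \<Rightarrow> nat \<Rightarrow> real) \<Rightarrow> nat \<Rightarrow> real)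
     \<Rightarrow> (nat \<Rightarrow> nat \<Rightarrow> real) \<Rightarrow> nat \<Rightarrow> (nat \<Rightarrow> nat \<Rightarrow> real) \<Rightarrow> real" where
  "damped_wealth m k l \<Gamma> \<sigma> S x t w =
     wealth m S x t w * (\<Prod>i=1..l. \<Prod>j=1..k. damp \<Gamma> \<sigma> (w i j))"

end

theory Submission imports Defs begin

lemma factor_le:
  fixes m :: nat and x S1 S2 :: "nat \<Rightarrow> real"
  assumes x: "\<And>i. i \<in> {1..m} \<Longrightarrow> x i > 0"
    and S1: "\<And>i. i \<in> {1..m} \<Longrightarrow> S1 i \<ge> L" and L: "L > 0"
    and d: "\<And>i. i \<in> {1..m} \<Longrightarrow> \<bar>S1 i - S2 i\<bar> \<le> B"
    and B: "B \<le> a * L" and a: "a \<ge> 0"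
  shows "(\<Sum>i=1..m. S2 i * x i) \<le> (1 + a) * (\<Sum>i=1..m. S1 i * x i)"
proof -
  have "(\<Sum>i=1..m. S2 i * x i) \<le> (\<Sum>i=1..m. S1 i * x i + a * (S1 i * x i))"
  proof (rule sum_mono)
    fix i assume i: "i \<in> {1..m}"
    have "S2 i \<le> S1 i + B" using d[OF i] by linarith
    also have "\<dots> \<le> S1 i + a * S1 i" using B S1[OF i] a mult_left_mono[of L "S1 i" a] by linarith
    finally have "S2 i * x i \<le> (S1 i + a * S1 i) * x i" using x[OF i] by (simp add: mult_right_mono)
    then show "S2 i * x i \<le> S1 i * x i + a * (S1 i * x i)" by (simp add: algebra_simps)
  qed
  also have "\<dots> = (1 + a) * (\<Sum>i=1..m. S1 i * x i)"
    by (simp add: sum.distrib sum_distrib_left algebra_simps)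
  finally show ?thesis .
qed

lemma damp_le:
  assumes "\<bar>a - b\<bar> \<le> d" "\<Gamma> \<ge> 0"
  shows "damp \<Gamma> \<sigma> b \<le> damp \<Gamma> \<sigma> a * exp (\<Gamma> * d)"
proof -
  have "min (b - \<sigma>) 0 \<le> min (a - \<sigma>) 0 + d" using assms by (auto simp: min_def split: abs_split)
  then have "\<Gamma> * min (b - \<sigma>) 0 \<le> \<Gamma> * min (a - \<sigma>) 0 + \<Gamma> * d"
    using assms(2) mult_left_mono by (metis distrib_left)
  then show ?thesis unfolding damp_def by (simp add: exp_add[symmetric])
qed

lemma exp_nu:
  fixes \<nu> :: real assumes "0 < \<nu>" "\<nu> \<le> 2"
  shows "exp (\<nu>/6) * exp (\<nu>/6) \<le> 1 + \<nu>"
proof -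
  have "exp (\<nu>/6) \<le> 1 + 2 * (\<nu>/6)" using exp_bound_lemma[of "\<nu>/6"] assms by simp
  then have "exp (\<nu>/6) * exp (\<nu>/6) \<le> (1 + \<nu>/3) * (1 + \<nu>/3)"
    using assms by (intro mult_mono) auto
  also have "\<dots> \<le> 1 + \<nu>"
  proof -
    have "\<nu> * \<nu> \<le> 2 * \<nu>" using assms mult_right_mono[of \<nu> 2 \<nu>] by simp
    then show ?thesis using assms by (simp add: algebra_simps field_simps)
  qed
  finally show ?thesis .
qed

lemma one_dir:
  fixes m k l t :: nat and \<nu> c' c \<epsilon> \<sigma> \<Gamma> :: real
  assumes m2: "m \<ge> 2" and nu: "0 < \<nu>" "\<nu> \<le> 2" and eps: "0 < \<epsilon>"
    and c'def: "c' = 2 * c / \<epsilon>" and G: "\<Gamma> \<ge> 2"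
    and cL: "cond_L m k l \<epsilon> S" and cD: "cond_D m k l c S"
    and t1: "t \<ge> 1" and tbig: "real t \<ge> 2 / (c' * real m)"
    and mk: "market m x" and w: "w \<in> param_space k l" and w': "w' \<in> param_space k l"
    and close: "\<forall>i\<in>{1..l}. \<forall>j\<in>{1..k}.
             \<bar>w i j - w' i j\<bar> \<le> \<nu> / (3 * \<Gamma> * c' * real m * real t ^ 4 * real k * real l)"
  shows "damped_wealth m k l \<Gamma> \<sigma> S x t w' \<le> (1 + \<nu>) * damped_wealth m k l \<Gamma> \<sigma> S x t w"
proof -
  define \<delta> where "\<delta> = \<nu> / (3 * \<Gamma> * c' * real m * real t ^ 4 * real k * real l)"
  define A where "A = (\<lambda>s v. \<Sum>i=1..m. S s v i * x s i)"
  define D where "D = (\<Sum>\<iota>=1..l. \<Sum>j=1..k-1. \<bar>w \<iota> j - w' \<iota> j\<bar>)"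
  define P where "P = (\<lambda>v. \<Prod>i=1..l. \<Prod>j=1..k. damp \<Gamma> \<sigma> (v i j))"
  have xpos: "\<And>s i. i \<in> {1..m} \<Longrightarrow> x s i > 0" using mk by (auto simp: market_def)
  have Lpos: "\<And>s::nat. \<epsilon> / (2 * real m * (real s + 1)^2) > 0" using eps m2 by auto
  have Sge: "\<And>s v i. v \<in> param_space k l \<Longrightarrow> i \<in> {1..m} \<Longrightarrow> S s v i \<ge> \<epsilon> / (2 * real m * (real s + 1)^2)"
    using cL by (auto simp: cond_L_def)
  have Apos: "\<And>s v. v \<in> param_space k l \<Longrightarrow> A s v > 0"
  proof -
    fix s v assume v: "v \<in> param_space k l"
    have "(\<Sum>i=1..m. S s v i * x s i) > 0"
    proof (rule sum_pos)
      show "{1..m} \<noteq> {}" using m2 by auto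
    next
      fix i assume "i \<in> {1..m}"
      then show "S s v i * x s i > 0" using Sge[OF v, of i s] Lpos[of s] xpos[of i s]
        by (meson less_le_trans mult_pos_pos)
    qed simp
    then show "A s v > 0" by (simp add: A_def)
  qed
  have wealthA: "\<And>v. wealth m S x t v = (\<Prod>s<t. A s v)" by (simp add: wealth_def A_def)
  have Ppos: "\<And>v. P v > 0" unfolding P_def damp_def by (intro prod_pos) auto
  have dw: "\<And>v. damped_wealth m k l \<Gamma> \<sigma> S x t v = (\<Prod>s<t. A s v) * P v"
    by (simp add: damped_wealth_def wealthA P_def)
  have Wpos: "(\<Prod>s<t. A s w) > 0" using Apos[OF w] by (intro prod_pos) auto
  have SD: "\<And>s i. i \<in> {1..m} \<Longrightarrow> \<bar>S s w i - S s w' i\<bar> \<le> c * (real s + 1) * D"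
    using cD w w' by (auto simp: cond_D_def D_def)
  show ?thesis
  proof (cases "\<forall>i\<in>{1..l}. \<forall>j\<in>{1..k}. w i j = w' i j")
    case True
    have D0: "D = 0" unfolding D_def using True by (intro sum.neutral ballI) auto
    have "\<And>s i. i \<in> {1..m} \<Longrightarrow> S s w' i = S s w i" using SD D0 by fastforce
    then have "\<And>s. A s w' = A s w" unfolding A_def by (intro sum.cong) auto
    moreover have "P w' = P w" unfolding P_def using True by (intro prod.cong) auto
    ultimately have "damped_wealth m k l \<Gamma> \<sigma> S x t w' = damped_wealth m k l \<Gamma> \<sigma> S x t w"
      by (simp add: dw)
    moreover have "damped_wealth m k l \<Gamma> \<sigma> S x t w \<ge> 0" using Wpos Ppos[of w] by (simp add: dw)
    ultimately show ?thesis using nu by (simp add: algebra_simps)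
  next
    case False
    then obtain i0 j0 where ij: "i0 \<in> {1..l}" "j0 \<in> {1..k}" "w i0 j0 \<noteq> w' i0 j0" by auto
    have "0 < \<bar>w i0 j0 - w' i0 j0\<bar>" using ij by simp
    also have "\<dots> \<le> \<delta>" using close ij by (simp add: \<delta>_def)
    finally have dpos: "\<delta> > 0" .
    define den where "den = 3 * \<Gamma> * c' * real m * real t ^ 4 * real k * real l"
    have denpos: "den > 0" using dpos nu by (simp add: \<delta>_def den_def zero_less_divide_iff)
    have kpos: "k > 0" using denpos by (cases k) (auto simp: den_def)
    have lpos: "l > 0" using denpos by (cases l) (auto simp: den_def)
    have cpos: "c' > 0"
    proof (rule ccontr)
      assume "\<not> c' > 0"
      then have "c' \<le> 0" by simp
      moreover have "3 * \<Gamma> * real m * real t ^ 4 * real k * real l \<ge> 0" using G by simp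
      ultimately have "den \<le> 0" unfolding den_def
        using mult_nonpos_nonneg[of c' "3 * \<Gamma> * real m * real t ^ 4 * real k * real l"]
        by (simp add: algebra_simps)
      then show False using denpos by simp
    qed
    have tc: "real t * c' * real m \<ge> 2" using tbig cpos m2 by (simp add: field_simps)
    have tt: "real t \<le> real t ^ 4" using t1
      by (metis One_nat_def less_one not_le of_nat_le_iff of_nat_power power_increasing_iff
          numeral_le_iff semiring_norm(70) self_le_power zero_less_numeral le_numeral_extra(4) one_le_numeral)
    have lkd: "real l * real k * \<delta> = \<nu> / (3 * \<Gamma> * c' * real m * real t ^ 4)"
      using kpos lpos by (simp add: \<delta>_def)
    have Dle: "D \<le> real l * real k * \<delta>"
    proof -
      have "D \<le> (\<Sum>\<iota>=1..l. \<Sum>j=1..k. \<bar>w \<iota> j - w' \<iota> j\<bar>)" unfolding D_def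
        by (intro sum_mono sum_mono2) auto
      also have "\<dots> \<le> (\<Sum>\<iota>=1..l. real k * \<delta>)"
      proof (rule sum_mono)
        fix i assume i: "i \<in> {1..l}"
        have "(\<Sum>j=1..k. \<bar>w i j - w' i j\<bar>) \<le> of_nat (card {1..k}) * \<delta>"
          using close i by (intro sum_bounded_above) (simp add: \<delta>_def)
        then show "(\<Sum>j=1..k. \<bar>w i j - w' i j\<bar>) \<le> real k * \<delta>" by simp
      qed
      finally show ?thesis by simp
    qed
    define a where "a = \<nu> / (6 * real t)"
    have apos: "a \<ge> 0" using nu by (simp add: a_def)
    have Dnn: "D \<ge> 0" unfolding D_def by (intro sum_nonneg) auto
    have key: "\<And>s. s < t \<Longrightarrow> c' * real m * (real s + 1)^3 * D \<le> a"
    proof -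
      fix s assume st: "s < t"
      have "c' * real m * (real s + 1)^3 * D \<le> c' * real m * (real s + 1)^3 * (real l * real k * \<delta>)"
        using Dle cpos by (intro mult_left_mono) auto
      also have "\<dots> = c' * real m * (real s + 1)^3 * (\<nu> / (3 * \<Gamma> * c' * real m * real t ^ 4))"
        by (simp only: lkd)
      also have "\<dots> = \<nu> * (real s + 1)^3 / (3 * \<Gamma> * real t ^ 4)"
        using cpos m2 G t1 by (simp add: field_simps)
      also have "\<dots> \<le> \<nu> * (real t)^3 / (3 * \<Gamma> * real t ^ 4)"
        using st nu G t1 by (intro divide_right_mono mult_left_mono power_mono) auto
      also have "\<dots> = \<nu> / (3 * \<Gamma> * real t)" using t1 G by (simp add: field_simps power_def)
      also have "\<dots> \<le> a" unfolding a_def using t1 G nu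
        by (intro divide_left_mono) auto
      finally show "c' * real m * (real s + 1)^3 * D \<le> a" .
    qed
    have fac: "\<And>s. s < t \<Longrightarrow> A s w' \<le> (1 + a) * A s w"
    proof -
      fix s assume st: "s < t"
      define L where "L = \<epsilon> / (2 * real m * (real s + 1)^2)"
      have "c * (real s + 1) * D = (c' * real m * (real s + 1)^3 * D) * L"
      proof -
        have gen: "\<And>u::real. u > 0 \<Longrightarrow> c * u * D = (2 * c / \<epsilon> * real m * u^3 * D) * (\<epsilon> / (2 * real m * u^2))"
          using eps m2 by (simp add: field_simps power2_eq_square power3_eq_cube)
        show ?thesis unfolding L_def c'def by (rule gen) simp
      qed
      also have "\<dots> \<le> a * L" using key[OF st] Lpos[of s] by (intro mult_right_mono) (auto simp: L_def)
      finally have B: "c * (real s + 1) * D \<le> a * L" .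
      show "A s w' \<le> (1 + a) * A s w" unfolding A_def
      proof (rule factor_le[of m "x s" L "S s w" "S s w'" "c * (real s + 1) * D" a])
        show "\<And>i. i \<in> {1..m} \<Longrightarrow> 0 < x s i" using xpos by blast
        show "\<And>i. i \<in> {1..m} \<Longrightarrow> L \<le> S s w i" unfolding L_def using Sge[OF w] by blast
        show "0 < L" unfolding L_def using Lpos by blast
        show "\<And>i. i \<in> {1..m} \<Longrightarrow> \<bar>S s w i - S s w' i\<bar> \<le> c * (real s + 1) * D" using SD by blast
      qed (use B apos in auto)
    qed
    have W: "(\<Prod>s<t. A s w') \<le> exp (\<nu>/6) * (\<Prod>s<t. A s w)"
    proof -
      have "(\<Prod>s<t. A s w') \<le> (\<Prod>s<t. (1 + a) * A s w)"
        using fac Apos[OF w'] by (intro prod_mono) (auto intro: less_imp_le)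
      also have "\<dots> = (1 + a) ^ t * (\<Prod>s<t. A s w)" by (simp add: prod.distrib)
      also have "\<dots> \<le> exp a ^ t * (\<Prod>s<t. A s w)"
        using Wpos apos by (intro mult_right_mono power_mono) (auto simp: exp_ge_add_one_self add_increasing)
      also have "exp a ^ t = exp (\<nu>/6)" using t1
        by (simp add: exp_of_nat_mult[symmetric] a_def)
      finally show ?thesis .
    qed
    have Pb: "P w' \<le> P w * exp (\<nu>/6)"
    proof -
      have "P w' \<le> (\<Prod>i=1..l. (\<Prod>j=1..k. damp \<Gamma> \<sigma> (w i j)) * exp (\<Gamma> * \<delta>) ^ k)"
        unfolding P_def
      proof (rule prod_mono)
        fix i assume i: "i \<in> {1..l}"
        have "(\<Prod>j=1..k. damp \<Gamma> \<sigma> (w' i j)) \<le> (\<Prod>j=1..k. damp \<Gamma> \<sigma> (w i j) * exp (\<Gamma> * \<delta>))"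
          using close i G by (intro prod_mono conjI damp_le) (auto simp: \<delta>_def damp_def)
        also have "\<dots> = (\<Prod>j=1..k. damp \<Gamma> \<sigma> (w i j)) * exp (\<Gamma> * \<delta>) ^ k"
          by (simp add: prod.distrib)
        finally show "0 \<le> (\<Prod>j=1..k. damp \<Gamma> \<sigma> (w' i j)) \<and>
            (\<Prod>j=1..k. damp \<Gamma> \<sigma> (w' i j)) \<le> (\<Prod>j=1..k. damp \<Gamma> \<sigma> (w i j)) * exp (\<Gamma> * \<delta>) ^ k"
          by (auto simp: damp_def intro: prod_nonneg)
      qed
      also have "\<dots> = P w * (exp (\<Gamma> * \<delta>) ^ k) ^ l" by (simp add: prod.distrib P_def)
      also have "(exp (\<Gamma> * \<delta>) ^ k) ^ l = exp (\<Gamma> * (real l * real k * \<delta>))"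
        by (simp add: exp_of_nat_mult[symmetric] power_mult[symmetric] algebra_simps)
      also have "\<Gamma> * (real l * real k * \<delta>) = \<nu> / (3 * c' * real m * real t ^ 4)"
        using G by (simp add: lkd)
      also have "\<dots> \<le> \<nu> / 6"
      proof -
        have "3 * c' * real m * real t ^ 4 \<ge> 6"
        proof -
          have "real t * c' * real m \<le> real t ^ 4 * c' * real m"
            using tt cpos by (intro mult_right_mono) auto
          then show ?thesis using tc by (simp add: algebra_simps)
        qed
        then show ?thesis using nu by (intro divide_left_mono) auto
      qed
      finally show ?thesis using Ppos[of w] by (simp add: mult_left_mono)
    qed
    have "damped_wealth m k l \<Gamma> \<sigma> S x t w' = (\<Prod>s<t. A s w') * P w'" by (simp add: dw)
    also have "\<dots> \<le> (exp (\<nu>/6) * (\<Prod>s<t. A s w)) * (P w * exp (\<nu>/6))"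
      using W Pb Ppos[of w'] Apos[OF w'] Wpos by (intro mult_mono) (auto intro: prod_nonneg less_imp_le)
    also have "\<dots> = (exp (\<nu>/6) * exp (\<nu>/6)) * damped_wealth m k l \<Gamma> \<sigma> S x t w"
      by (simp add: dw)
    also have "\<dots> \<le> (1 + \<nu>) * damped_wealth m k l \<Gamma> \<sigma> S x t w"
      using exp_nu[OF nu] Wpos Ppos[of w] by (intro mult_right_mono) (auto simp: dw)
    finally show ?thesis .
  qed
qed

theorem mainTheorem13:
  fixes m :: nat and \<nu> c' :: real
  assumes "m \<ge> 2" and "0 < \<nu>" and "\<nu> \<le> 2"
  shows "\<exists>t0::nat. \<forall>(k::nat) (l::nat) S (\<epsilon>::real) (c::real) (\<sigma>::real) (\<Gamma>::real).
     (0 < \<epsilon> \<and> \<epsilon> < 1 \<and> c' = 2 * c / \<epsilon> \<and> 0 < \<sigma> \<and> \<Gamma> \<ge> 2 \<and>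
      strategy m k l S \<and> cond_L m k l \<epsilon> S \<and> cond_D m k l c S) \<longrightarrow>
     (\<forall>t\<ge>t0. \<forall>x. market m x \<longrightarrow>
        (\<forall>w\<in>param_space k l. \<forall>w'\<in>param_space k l.
          (\<forall>i\<in>{1..l}. \<forall>j\<in>{1..k}.
             \<bar>w i j - w' i j\<bar> \<le> \<nu> / (3 * \<Gamma> * c' * real m * real t ^ 4 * real k * real l)) \<longrightarrow>
          damped_wealth m k l \<Gamma> \<sigma> S x t w / (1 + \<nu>) \<le> damped_wealth m k l \<Gamma> \<sigma> S x t w' \<and>
          damped_wealth m k l \<Gamma> \<sigma> S x t w' \<le> (1 + \<nu>) * damped_wealth m k l \<Gamma> \<sigma> S x t w))"
proof (intro exI[of _ "nat \<lceil>2 / (c' * real m)\<rceil> + 1"] allI impI ballI conjI)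
  fix k l :: nat and S and \<epsilon> c \<sigma> \<Gamma> :: real and t :: nat and x w w'
  assume H: "0 < \<epsilon> \<and> \<epsilon> < 1 \<and> c' = 2 * c / \<epsilon> \<and> 0 < \<sigma> \<and> \<Gamma> \<ge> 2 \<and>
      strategy m k l S \<and> cond_L m k l \<epsilon> S \<and> cond_D m k l c S"
    and t: "nat \<lceil>2 / (c' * real m)\<rceil> + 1 \<le> t" and mk: "market m x"
    and w: "w \<in> param_space k l" and w': "w' \<in> param_space k l"
    and cl: "\<forall>i\<in>{1..l}. \<forall>j\<in>{1..k}.
             \<bar>w i j - w' i j\<bar> \<le> \<nu> / (3 * \<Gamma> * c' * real m * real t ^ 4 * real k * real l)"
  have t1: "t \<ge> 1" using t by simp
  have tb: "real t \<ge> 2 / (c' * real m)"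
    using t real_nat_ceiling_ge[of "2 / (c' * real m)"] by linarith
  have cl': "\<forall>i\<in>{1..l}. \<forall>j\<in>{1..k}.
             \<bar>w' i j - w i j\<bar> \<le> \<nu> / (3 * \<Gamma> * c' * real m * real t ^ 4 * real k * real l)"
    using cl by (simp add: abs_minus_commute)
  show "damped_wealth m k l \<Gamma> \<sigma> S x t w' \<le> (1 + \<nu>) * damped_wealth m k l \<Gamma> \<sigma> S x t w"
    using one_dir[OF assms _ _ _ _ _ t1 tb mk w w' cl] H by blast
  have "damped_wealth m k l \<Gamma> \<sigma> S x t w \<le> (1 + \<nu>) * damped_wealth m k l \<Gamma> \<sigma> S x t w'"
    using one_dir[OF assms _ _ _ _ _ t1 tb mk w' w cl'] H by blast
  then show "damped_wealth m k l \<Gamma> \<sigma> S x t w / (1 + \<nu>) \<le> damped_wealth m k l \<Gamma> \<sigma> S x t w'"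
    using assms(2) by (simp add: divide_le_eq mult.commute)
qed

end
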